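(* Let $\Lambda=\{mz+nw : m,n\in\mathbb{Z}\}$ be a lattice in $\mathbb{C}$, where $z,w\in\mathbb{C}$ are linearly independent over $\mathbb{R}$. Let $r>0$ be such that $\{\zeta:|\zeta-z_1|<r\}\cap\{\zeta:|\zeta-z_2|<r\}=\emptyset$ for all distinct $z_1,z_2\in\Lambda$, and let $$D=\mathbb{C}\setminus\bigcup_{z_1\in\Lambda}\{\zeta:|\zeta-z_1|<r\}.$$ Then $bh(T(D))=\infty$, i.e. $E_a[T(D)^p]<\infty$ for every $p>0$.
   Context: Planar Brownian motion $B_t$ with $B_0=a$; $E_a$ the corresponding expectation. $T(D)=\inf\{t\geq0:B_t\notin D\}$. For a stopping time $\tau$, $bh(\tau)=\sup\{p>0:E_a[\tau^p]<\infty\}$. *)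

theory Defs
  imports "HOL-Probability.Probability"
begin

text \<open>Planar (complex-valued) Brownian motion started at a, on a probability space M:
  B_0 = a almost surely, almost surely continuous paths, increments B_t - B_s (s < t)
  are centred Gaussian with covariance (t - s) I (independent real and imaginary parts
  of variance t - s), and increments over consecutive intervals are independent.\<close>
definition planar_BM :: "'w measure \<Rightarrow> (real \<Rightarrow> 'w \<Rightarrow> complex) \<Rightarrow> complex \<Rightarrow> bool" where
  "planar_BM M B a \<longleftrightarrow>
     prob_space M \<and>
     (\<forall>t. B t \<in> borel_measurable M) \<and>
     (AE \<omega> in M. B 0 \<omega> = a) \<and>
     (AE \<omega> in M. continuous_on {0..} (\<lambda>t. B t \<omega>)) \<and>
     (\<forall>s t. 0 \<le> s \<and> s < t \<longrightarrow>
        distributed M lborel (\<lambda>\<omega>. B t \<omega> - B s \<omega>)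
          (\<lambda>x. ennreal (normal_density 0 (sqrt (t - s)) (Re x) *
                         normal_density 0 (sqrt (t - s)) (Im x)))) \<and>
     (\<forall>(n::nat) (ts::nat \<Rightarrow> real). 0 \<le> ts 0 \<and> mono ts \<longrightarrow>
        prob_space.indep_vars M (\<lambda>_. borel) (\<lambda>i \<omega>. B (ts (Suc i)) \<omega> - B (ts i) \<omega>) {..<n})"

text \<open>Exit time T(D) = inf {t \<ge> 0. B_t \<notin> D}, valued in [0, \<infinity>] (inf of empty set = \<infinity>).\<close>
definition exit_time :: "(real \<Rightarrow> 'w \<Rightarrow> complex) \<Rightarrow> complex set \<Rightarrow> 'w \<Rightarrow> ennreal" where
  "exit_time B D \<omega> = (INF t \<in> {t. 0 \<le> t \<and> B t \<omega> \<notin> D}. ennreal t)"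

text \<open>E[\<tau>^p] < \<infinity> for a [0,\<infinity>]-valued random time \<tau> (\<tau>^p = \<infinity> where \<tau> = \<infinity>).\<close>
definition finite_moment :: "'w measure \<Rightarrow> ('w \<Rightarrow> ennreal) \<Rightarrow> real \<Rightarrow> bool" where
  "finite_moment M \<tau> p \<longleftrightarrow>
     (AE \<omega> in M. \<tau> \<omega> < \<top>) \<and> (\<integral>\<^sup>+ \<omega>. ennreal (enn2real (\<tau> \<omega>) powr p) \<partial>M) < \<top>"

end

theory Submission
  imports Defs
begin


lemma lattice_det:
  fixes z w :: complex
  assumes indep: "\<forall>\<alpha> \<beta> :: real. \<alpha> *\<^sub>R z + \<beta> *\<^sub>R w = 0 \<longrightarrow> \<alpha> = 0 \<and> \<beta> = 0"
  shows "Re z * Im w - Im z * Re w \<noteq> 0"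
proof
  assume d: "Re z * Im w - Im z * Re w = 0"
  show False
  proof (cases "Re w = 0 \<and> Re z = 0")
    case False
    have "Re w *\<^sub>R z + (- Re z) *\<^sub>R w = 0"
      using d by (simp add: complex_eq_iff algebra_simps)
    then have "Re w = 0 \<and> - Re z = 0" using indep by blast
    with False show False by auto
  next
    case T1: True
    show False
    proof (cases "Im w = 0 \<and> Im z = 0")
      case False
      have "Im w *\<^sub>R z + (- Im z) *\<^sub>R w = 0"
        using T1 by (simp add: complex_eq_iff algebra_simps)
      then have "Im w = 0 \<and> - Im z = 0" using indep by blast
      with False show False by auto
    next
      case True
      then have "z = 0" using T1 by (simp add: complex_eq_iff)
      then have "1 *\<^sub>R z + 0 *\<^sub>R w = 0" by simp
      from indep[rule_format, OF this] show False by simp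
    qed
  qed
qed

lemma lattice_cover:
  fixes z w x :: complex
  assumes indep: "\<forall>\<alpha> \<beta> :: real. \<alpha> *\<^sub>R z + \<beta> *\<^sub>R w = 0 \<longrightarrow> \<alpha> = 0 \<and> \<beta> = 0"
  shows "\<exists>m n::int. cmod (x - (of_int m * z + of_int n * w)) \<le> cmod z + cmod w"
proof -
  define d where "d = Re z * Im w - Im z * Re w"
  have d0: "d \<noteq> 0" using lattice_det[OF indep] by (simp add: d_def)
  define \<alpha> where "\<alpha> = (Re x * Im w - Im x * Re w) / d"
  define \<beta> where "\<beta> = (Re z * Im x - Im z * Re x) / d"
  have n1: "(Re x * Im w - Im x * Re w) * Re z + (Re z * Im x - Im z * Re x) * Re w = Re x * d"
    unfolding d_def by algebra
  have n2: "(Re x * Im w - Im x * Re w) * Im z + (Re z * Im x - Im z * Re x) * Im w = Im x * d"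
    unfolding d_def by algebra
  have r1: "\<alpha> * Re z + \<beta> * Re w = Re x"
  proof -
    have "\<alpha> * Re z + \<beta> * Re w = ((Re x * Im w - Im x * Re w) * Re z + (Re z * Im x - Im z * Re x) * Re w) / d"
      by (simp add: \<alpha>_def \<beta>_def add_divide_distrib)
    then show ?thesis using n1 d0 by simp
  qed
  have r2: "\<alpha> * Im z + \<beta> * Im w = Im x"
  proof -
    have "\<alpha> * Im z + \<beta> * Im w = ((Re x * Im w - Im x * Re w) * Im z + (Re z * Im x - Im z * Re x) * Im w) / d"
      by (simp add: \<alpha>_def \<beta>_def add_divide_distrib)
    then show ?thesis using n2 d0 by simp
  qed
  have x: "x = of_real \<alpha> * z + of_real \<beta> * w"
    using r1 r2 by (simp add: complex_eq_iff)
  show ?thesis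
  proof (intro exI)
    have "x - (of_int \<lfloor>\<alpha>\<rfloor> * z + of_int \<lfloor>\<beta>\<rfloor> * w)
        = of_real (\<alpha> - of_int \<lfloor>\<alpha>\<rfloor>) * z + of_real (\<beta> - of_int \<lfloor>\<beta>\<rfloor>) * w"
      by (subst x) (simp add: algebra_simps)
    also have "cmod \<dots> \<le> \<bar>\<alpha> - of_int \<lfloor>\<alpha>\<rfloor>\<bar> * cmod z + \<bar>\<beta> - of_int \<lfloor>\<beta>\<rfloor>\<bar> * cmod w"
      by (metis norm_mult norm_of_real norm_triangle_ineq)
    also have "\<dots> \<le> 1 * cmod z + 1 * cmod w"
      by (intro add_mono mult_right_mono) (auto simp: abs_if, linarith+)
    finally show "cmod (x - (of_int \<lfloor>\<alpha>\<rfloor> * z + of_int \<lfloor>\<beta>\<rfloor> * w)) \<le> cmod z + cmod w" by simp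
  qed
qed



lemma gauss_lower:
  fixes y :: complex
  assumes "cmod y \<le> K"
  shows "exp (-(K^2)) / (2*pi) \<le> normal_density 0 1 (Re y) * normal_density 0 1 (Im y)"
proof -
  have "normal_density 0 1 (Re y) * normal_density 0 1 (Im y)
      = exp (-((Re y)^2 + (Im y)^2)/2) / (2*pi)"
    by (simp add: normal_density_def exp_add[symmetric] field_simps real_sqrt_mult[symmetric])
  also have "(Re y)^2 + (Im y)^2 = (cmod y)^2" by (simp add: cmod_power2)
  finally have e: "normal_density 0 1 (Re y) * normal_density 0 1 (Im y) = exp (-((cmod y)^2)/2) / (2*pi)" .
  have "(cmod y)^2 \<le> K^2" using assms by (intro power_mono) auto
  then have "-(K^2) \<le> -((cmod y)^2)/2" using zero_le_power2[of "cmod y"] by linarith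
  then show ?thesis unfolding e by (intro divide_right_mono) auto
qed

lemma summable_powr_geom:
  fixes p q :: real
  assumes q: "0 < q" "q < 1"
  shows "summable (\<lambda>n. (real n + 1) powr p * q ^ n)"
proof -
  define \<rho> where "\<rho> = (1 + q) / (2 * q)"
  have \<rho>1: "1 < \<rho>" using q by (simp add: \<rho>_def field_simps)
  have lim1: "(\<lambda>n. (real n + 2) / (real n + 1)) \<longlonglongrightarrow> 1"
  proof -
    have "(\<lambda>n. 1 + 1 / real (Suc n)) \<longlonglongrightarrow> 1 + 0"
      by (intro tendsto_add tendsto_const LIMSEQ_Suc[OF lim_1_over_n])
    moreover have "(\<lambda>n. 1 + 1 / real (Suc n)) = (\<lambda>n. (real n + 2) / (real n + 1))"
      by (auto simp: fun_eq_iff field_simps)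
    ultimately show ?thesis by simp
  qed
  have "(\<lambda>n. ((real n + 2) / (real n + 1)) powr p) \<longlonglongrightarrow> 1 powr p"
    by (intro tendsto_powr lim1 tendsto_const) auto
  then have "eventually (\<lambda>n. ((real n + 2) / (real n + 1)) powr p < \<rho>) sequentially"
    using \<rho>1 by (intro order_tendstoD) auto
  then obtain N where N: "\<And>n. n \<ge> N \<Longrightarrow> ((real n + 2) / (real n + 1)) powr p < \<rho>"
    by (auto simp: eventually_at_top_linorder)
  show ?thesis
  proof (rule summable_ratio_test[of "(1+q)/2" N])
    show "(1+q)/2 < 1" using q by simp
    fix n assume "N \<le> n"
    then have r: "((real n + 2) / (real n + 1)) powr p \<le> \<rho>" using N by fastforce
    have pos: "(real n + 1) powr p > 0" by simp
    have pd: "((real n + 2) / (real n + 1)) powr p = (real n + 2) powr p / (real n + 1) powr p"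
      by (rule powr_divide)
    have e: "real (Suc n) + 1 = real n + 2" by simp
    have "(real (Suc n) + 1) powr p * q ^ Suc n
        = ((real n + 2) / (real n + 1)) powr p * q * ((real n + 1) powr p * q ^ n)"
      unfolding pd e using pos by (simp add: field_simps)
    also have "\<dots> \<le> \<rho> * q * ((real n + 1) powr p * q ^ n)"
      using r q by (intro mult_right_mono) auto
    also have "\<rho> * q = (1+q)/2" using q by (simp add: \<rho>_def)
    finally show "norm ((real (Suc n) + 1) powr p * q ^ Suc n) \<le> (1 + q) / 2 * norm ((real n + 1) powr p * q ^ n)"
      using q by simp
  qed
qed

theorem theorem4p1:
  fixes z w :: complex and r :: real and a :: complex
    and M :: "'w measure" and B :: "real \<Rightarrow> 'w \<Rightarrow> complex"
    and \<Lambda> D :: "complex set"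
  assumes indep: "\<forall>\<alpha> \<beta> :: real. \<alpha> *\<^sub>R z + \<beta> *\<^sub>R w = 0 \<longrightarrow> \<alpha> = 0 \<and> \<beta> = 0"
    and Lambda_def: "\<Lambda> = {of_int m * z + of_int n * w | m n. True}"
    and r_pos: "r > 0"
    and disj: "\<forall>z1\<in>\<Lambda>. \<forall>z2\<in>\<Lambda>. z1 \<noteq> z2 \<longrightarrow> ball z1 r \<inter> ball z2 r = {}"
    and D_def: "D = - (\<Union>z1\<in>\<Lambda>. ball z1 r)"
    and BM: "planar_BM M B a"
  shows "\<forall>p > 0. finite_moment M (exit_time B D) p"
proof -
  have PS: "prob_space M" and Bm: "\<And>t. B t \<in> borel_measurable M"
    and B0: "AE \<omega> in M. B 0 \<omega> = a"
    and dist: "\<And>s t. 0 \<le> s \<Longrightarrow> s < t \<Longrightarrow> distributed M lborel (\<lambda>\<omega>. B t \<omega> - B s \<omega>)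
          (\<lambda>x. ennreal (normal_density 0 (sqrt (t - s)) (Re x) *
                         normal_density 0 (sqrt (t - s)) (Im x)))"
    and ind: "\<And>(n::nat) (ts::nat \<Rightarrow> real). 0 \<le> ts 0 \<Longrightarrow> mono ts \<Longrightarrow>
        prob_space.indep_vars M (\<lambda>_. borel) (\<lambda>i \<omega>. B (ts (Suc i)) \<omega> - B (ts i) \<omega>) {..<n}"
    using BM unfolding planar_BM_def by auto
  interpret prob_space M by (rule PS)
  define \<Delta> where "\<Delta> i \<omega> = B (real (Suc i)) \<omega> - B (real i) \<omega>" for i \<omega>
  define g where "g x = ennreal (normal_density 0 1 (Re x) * normal_density 0 1 (Im x))" for x :: complex
  have \<Delta>m[measurable]: "\<Delta> i \<in> borel_measurable M" for i
    unfolding \<Delta>_def using Bm by measurable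
  have \<Delta>d: "distributed M lborel (\<Delta> i) g" for i
    using dist[of "real i" "real (Suc i)"] unfolding \<Delta>_def g_def by simp
  have \<Delta>ind: "indep_vars (\<lambda>_. borel) \<Delta> {..<n}" for n
    using ind[of "\<lambda>i. real i" n] unfolding \<Delta>_def by (simp add: mono_def)
  have Dclosed: "closed D" unfolding D_def by (intro closed_Compl open_UN) auto
  then have Dsets[measurable]: "D \<in> sets borel" by simp
  define K where "K = cmod z + cmod w"
  define c where "c = exp (-((K + r)^2)) / (2*pi)"
  define \<delta> where "\<delta> = c * measure lborel (ball (0::complex) r)"
  have c_pos: "c > 0" unfolding c_def by simp
  have \<delta>_pos: "\<delta> > 0" unfolding \<delta>_def using c_pos r_pos by (simp add: content_ball_pos)
  have hit: "\<delta> \<le> prob {\<omega> \<in> space M. y + \<Delta> i \<omega> \<notin> D}" for y i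
  proof -
    obtain m n :: int where mn: "cmod (y - (of_int m * z + of_int n * w)) \<le> K"
      using lattice_cover[OF indep, of y] unfolding K_def by blast
    define l where "l = of_int m * z + of_int n * w"
    have l\<Lambda>: "l \<in> \<Lambda>" unfolding l_def Lambda_def by blast
    have sub: "{\<omega> \<in> space M. \<Delta> i \<omega> \<in> ball (l - y) r} \<subseteq> {\<omega> \<in> space M. y + \<Delta> i \<omega> \<notin> D}"
    proof safe
      fix \<omega> assume "\<Delta> i \<omega> \<in> ball (l - y) r" "y + \<Delta> i \<omega> \<in> D"
      then have "y + \<Delta> i \<omega> \<in> ball l r" by (simp add: dist_norm algebra_simps)
      with l\<Lambda> \<open>y + \<Delta> i \<omega> \<in> D\<close> show False unfolding D_def by blast
    qed
    have gc: "ennreal c * indicator (ball (l - y) r) x \<le> g x * indicator (ball (l - y) r) x" for x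
    proof (cases "x \<in> ball (l - y) r")
      case True
      then have "cmod x \<le> K + r"
        using mn unfolding l_def[symmetric]
        by (smt (verit, best) dist_norm mem_ball norm_minus_commute norm_triangle_ineq2)
      from gauss_lower[OF this] show ?thesis using True unfolding g_def c_def by simp
    qed simp
    have "ennreal \<delta> = ennreal c * emeasure lborel (ball (l - y) r)"
    proof -
      have "emeasure lborel (ball (l - y) r) = emeasure lborel (ball (0::complex) r)"
        using r_pos by (simp add: emeasure_ball)
      also have "\<dots> = ennreal (measure lborel (ball (0::complex) r))"
        using emeasure_lborel_ball_finite[of "0::complex" r] by (intro emeasure_eq_ennreal_measure) auto
      finally show ?thesis unfolding \<delta>_def using c_pos by (simp add: ennreal_mult)
    qed
    also have "\<dots> = (\<integral>\<^sup>+x. ennreal c * indicator (ball (l - y) r) x \<partial>lborel)"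
      by (simp add: nn_integral_cmult_indicator)
    also have "\<dots> \<le> (\<integral>\<^sup>+x. g x * indicator (ball (l - y) r) x \<partial>lborel)"
      by (intro nn_integral_mono gc)
    also have "\<dots> = emeasure M (\<Delta> i -` ball (l - y) r \<inter> space M)"
      by (rule distributed_emeasure[OF \<Delta>d, symmetric]) simp
    also have "\<Delta> i -` ball (l - y) r \<inter> space M = {\<omega> \<in> space M. \<Delta> i \<omega> \<in> ball (l - y) r}" by auto
    also have "emeasure M \<dots> \<le> emeasure M {\<omega> \<in> space M. y + \<Delta> i \<omega> \<notin> D}"
      by (intro emeasure_mono sub) measurable
    finally show ?thesis
      by (simp add: emeasure_eq_measure ennreal_le_iff)
  qed
  define q where "q = max (1 - \<delta>) (1/2)"
  have q: "0 < q" "q < 1" using \<delta>_pos unfolding q_def by auto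
  have miss: "emeasure M {\<omega> \<in> space M. y + \<Delta> i \<omega> \<in> D} \<le> ennreal q" for y i
  proof -
    have ev: "{\<omega> \<in> space M. y + \<Delta> i \<omega> \<notin> D} \<in> events" by measurable
    have "{\<omega> \<in> space M. y + \<Delta> i \<omega> \<in> D} = space M - {\<omega> \<in> space M. y + \<Delta> i \<omega> \<notin> D}" by auto
    then have "prob {\<omega> \<in> space M. y + \<Delta> i \<omega> \<in> D} = 1 - prob {\<omega> \<in> space M. y + \<Delta> i \<omega> \<notin> D}"
      using prob_compl[OF ev] by simp
    also have "\<dots> \<le> q" using hit[of y i] unfolding q_def by simp
    finally show ?thesis by (simp add: emeasure_eq_measure ennreal_leI)
  qed
  define A where "A n = {\<omega> \<in> space M. \<forall>k<n. a + (\<Sum>i\<le>k. \<Delta> i \<omega>) \<in> D}" for n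
  have Asets[measurable]: "A n \<in> events" for n
    unfolding A_def by measurable
  have Astep: "emeasure M (A (Suc n)) \<le> ennreal q * emeasure M (A n)" for n
  proof -
    define P where "P = PiM {..<n} (\<lambda>_. borel :: complex measure)"
    define V where "V \<omega> = restrict (\<lambda>i. \<Delta> i \<omega>) {..<n}" for \<omega>
    have Vm[measurable]: "V \<in> measurable M P" unfolding V_def P_def by measurable
    have iv0: "indep_var P V (PiM {n} (\<lambda>_. borel)) (\<lambda>\<omega>. restrict (\<lambda>i. \<Delta> i \<omega>) {n})"
      unfolding P_def V_def by (rule indep_var_restrict[OF \<Delta>ind[of "Suc n"]]) auto
    define W where "W \<omega> = restrict (\<lambda>i. \<Delta> i \<omega>) {n}" for \<omega>
    define P1 where "P1 = PiM {n} (\<lambda>_. borel :: complex measure)"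
    have Wm[measurable]: "W \<in> measurable M P1" unfolding W_def P1_def by measurable
    have jd: "distr M P V \<Otimes>\<^sub>M distr M P1 W = distr M (P \<Otimes>\<^sub>M P1) (\<lambda>\<omega>. (V \<omega>, W \<omega>))"
      using iv0 indep_var_distribution_eq unfolding W_def P1_def by auto
    define S where "S = {v \<in> space P. \<forall>k<n. a + (\<Sum>i\<le>k. v i) \<in> D}"
    have Ssets[measurable]: "S \<in> sets P" unfolding S_def P_def by measurable
    define Q where "Q = {pr \<in> space (P \<Otimes>\<^sub>M P1). fst pr \<in> S \<and> a + (\<Sum>i<n. fst pr i) + snd pr n \<in> D}"
    have qm[measurable]: "(\<lambda>pr. a + (\<Sum>i<n. fst pr i) + snd pr n) \<in> borel_measurable (P \<Otimes>\<^sub>M P1)"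
      unfolding P_def P1_def by measurable
    have Qsets[measurable]: "Q \<in> sets (P \<Otimes>\<^sub>M P1)" unfolding Q_def by measurable
    have VS: "V -` S \<inter> space M = A n"
      by (auto simp: S_def A_def V_def P_def space_PiM)
    have AQ: "A (Suc n) = (\<lambda>\<omega>. (V \<omega>, W \<omega>)) -` Q \<inter> space M"
    proof -
      have "(\<forall>k<Suc n. a + (\<Sum>i\<le>k. \<Delta> i \<omega>) \<in> D) \<longleftrightarrow>
           (\<forall>k<n. a + (\<Sum>i\<le>k. \<Delta> i \<omega>) \<in> D) \<and> a + (\<Sum>i<n. \<Delta> i \<omega>) + \<Delta> n \<omega> \<in> D" for \<omega>
      proof -
        have e1: "(\<forall>k<Suc n. PP k) \<longleftrightarrow> (\<forall>k<n. PP k) \<and> PP n" for PP :: "nat \<Rightarrow> bool"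
          by (auto simp: less_Suc_eq)
        have e2: "(\<Sum>i\<le>n. \<Delta> i \<omega>) = (\<Sum>i<n. \<Delta> i \<omega>) + \<Delta> n \<omega>"
          by (simp add: lessThan_Suc_atMost[symmetric])
        show ?thesis unfolding e1 e2 by (simp add: add.assoc)
      qed
      moreover have "(\<Sum>i<n. V \<omega> i) = (\<Sum>i<n. \<Delta> i \<omega>)" for \<omega>
        by (simp add: V_def)
      ultimately show ?thesis
        by (auto simp: A_def Q_def S_def V_def W_def P_def P1_def space_PiM space_pair_measure)
    qed
    interpret PD: prob_space "distr M P1 W" by (rule prob_space_distr) (rule Wm)
    have "emeasure M (A (Suc n)) = emeasure (distr M (P \<Otimes>\<^sub>M P1) (\<lambda>\<omega>. (V \<omega>, W \<omega>))) Q"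
      unfolding AQ by (rule emeasure_distr[symmetric]) simp_all
    also have "\<dots> = emeasure (distr M P V \<Otimes>\<^sub>M distr M P1 W) Q"
      unfolding jd ..
    also have "\<dots> = (\<integral>\<^sup>+v. emeasure (distr M P1 W) (Pair v -` Q) \<partial>distr M P V)"
      by (rule PD.emeasure_pair_measure_alt) simp
    also have "\<dots> \<le> (\<integral>\<^sup>+v. ennreal q * indicator S v \<partial>distr M P V)"
    proof (intro nn_integral_mono)
      fix v assume v: "v \<in> space (distr M P V)"
      show "emeasure (distr M P1 W) (Pair v -` Q) \<le> ennreal q * indicator S v"
      proof (cases "v \<in> S")
        case True
        then have "Pair v -` Q = {d \<in> space P1. a + (\<Sum>i<n. v i) + d n \<in> D}"
          using v by (auto simp: Q_def space_pair_measure)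
        moreover have "emeasure (distr M P1 W) {d \<in> space P1. a + (\<Sum>i<n. v i) + d n \<in> D}
            = emeasure M {\<omega> \<in> space M. a + (\<Sum>i<n. v i) + \<Delta> n \<omega> \<in> D}"
        proof (subst emeasure_distr)
          show "{d \<in> space P1. a + (\<Sum>i<n. v i) + d n \<in> D} \<in> sets P1" unfolding P1_def by measurable
          show "emeasure M (W -` {d \<in> space P1. a + (\<Sum>i<n. v i) + d n \<in> D} \<inter> space M)
            = emeasure M {\<omega> \<in> space M. a + (\<Sum>i<n. v i) + \<Delta> n \<omega> \<in> D}"
            by (intro arg_cong[where f="emeasure M"]) (auto simp: W_def P1_def space_PiM)
        qed simp
        ultimately show ?thesis using True miss by simp
      next
        case False
        then have "Pair v -` Q = {}" by (auto simp: Q_def)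
        then show ?thesis using False by simp
      qed
    qed
    also have "\<dots> = ennreal q * emeasure (distr M P V) S"
      by (rule nn_integral_cmult_indicator) simp
    also have "emeasure (distr M P V) S = emeasure M (A n)"
      by (subst emeasure_distr) (simp_all add: VS)
    finally show ?thesis .
  qed
  have Abound: "emeasure M (A n) \<le> ennreal (q ^ n)" for n
  proof (induction n)
    case 0
    then show ?case using emeasure_le_1[of "A 0"] by simp
  next
    case (Suc n)
    have "emeasure M (A (Suc n)) \<le> ennreal q * emeasure M (A n)" by (rule Astep)
    also have "\<dots> \<le> ennreal q * ennreal (q ^ n)" by (intro mult_left_mono Suc) auto
    finally show ?case using q by (simp add: ennreal_mult[symmetric] mult.commute)
  qed
  define T where "T = exit_time B D"
  have telesc: "a + (\<Sum>i\<le>k. \<Delta> i \<omega>) = B (real (Suc k)) \<omega>" if "B 0 \<omega> = a" for \<omega> k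
  proof -
    have "(\<Sum>i\<le>k. \<Delta> i \<omega>) = (\<Sum>i<Suc k. B (real (Suc i)) \<omega> - B (real i) \<omega>)"
      by (simp add: \<Delta>_def lessThan_Suc_atMost)
    also have "\<dots> = B (real (Suc k)) \<omega> - B (real 0) \<omega>"
      by (rule sum_lessThan_telescope[where f="\<lambda>i. B (real i) \<omega>"])
    finally show ?thesis using that by simp
  qed
  have TA: "\<omega> \<in> A n" if "\<omega> \<in> space M" "B 0 \<omega> = a" "of_nat n < T \<omega>" for \<omega> n
    unfolding A_def
  proof (intro CollectI conjI allI impI that(1))
    fix k assume k: "k < n"
    show "a + (\<Sum>i\<le>k. \<Delta> i \<omega>) \<in> D"
    proof (rule ccontr)
      assume "a + (\<Sum>i\<le>k. \<Delta> i \<omega>) \<notin> D"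
      then have "B (real (Suc k)) \<omega> \<notin> D" using telesc[OF that(2)] by simp
      then have "T \<omega> \<le> ennreal (real (Suc k))"
        unfolding T_def exit_time_def by (intro INF_lower) auto
      also have "\<dots> \<le> of_nat n" using k
        by (simp add: ennreal_of_nat_eq_real_of_nat[symmetric] del: of_nat_Suc)
      finally show False using that(3) by simp
    qed
  qed
  have AE_fin: "AE \<omega> in M. T \<omega> < \<top>"
  proof -
    have null: "(\<Inter>n. A n) \<in> null_sets M"
    proof -
      have le: "measure M (\<Inter>n. A n) \<le> q ^ n" for n
      proof -
        have "emeasure M (\<Inter>n. A n) \<le> emeasure M (A n)" by (intro emeasure_mono) auto
        also have "\<dots> \<le> ennreal (q ^ n)" by (rule Abound)
        finally show ?thesis using q by (simp add: emeasure_eq_measure ennreal_le_iff)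
      qed
      have "measure M (\<Inter>n. A n) = 0"
      proof (rule ccontr)
        assume "measure M (\<Inter>n. A n) \<noteq> 0"
        then have "0 < measure M (\<Inter>n. A n)" using measure_nonneg[of M] by (simp add: order_less_le)
        then obtain n where "q ^ n < measure M (\<Inter>n. A n)" using real_arch_pow_inv q by blast
        with le[of n] show False by simp
      qed
      then show ?thesis by (auto simp: emeasure_eq_measure null_sets_def)
    qed
    from B0 obtain N0 where N0': "{\<omega> \<in> space M. \<not> B 0 \<omega> = a} \<subseteq> N0" "emeasure M N0 = 0" "N0 \<in> sets M"
      by (rule AE_E)
    then have N0: "N0 \<in> null_sets M" "{\<omega> \<in> space M. \<not> B 0 \<omega> = a} \<subseteq> N0"
      by (auto intro: null_setsI)
    show ?thesis
    proof (rule AE_I'[of "N0 \<union> (\<Inter>n. A n)"])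
      show "N0 \<union> (\<Inter>n. A n) \<in> null_sets M" using N0(1) null by auto
      show "{\<omega> \<in> space M. \<not> T \<omega> < \<top>} \<subseteq> N0 \<union> (\<Inter>n. A n)"
      proof safe
        fix \<omega> n assume "\<omega> \<in> space M" "\<not> T \<omega> < \<top>" "\<omega> \<notin> N0"
        then have "B 0 \<omega> = a" using N0(2) by blast
        moreover have "T \<omega> = \<top>" using \<open>\<not> T \<omega> < \<top>\<close> by (simp add: less_top[symmetric])
        then have "of_nat n < T \<omega>" by (simp add: of_nat_less_top)
        ultimately show "\<omega> \<in> A n" using TA \<open>\<omega> \<in> space M\<close> by blast
      qed
    qed
  qed
  show ?thesis
  proof (intro allI impI)
    fix p :: real assume p: "p > 0"
    define f where "f n \<omega> = ennreal ((real n + 1) powr p) * indicator (A n) \<omega>" for n \<omega>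
    have fm: "f n \<in> borel_measurable M" for n unfolding f_def by measurable
    have pw: "ennreal (enn2real (T \<omega>) powr p) \<le> (\<Sum>n. f n \<omega>)"
      if "\<omega> \<in> space M" "B 0 \<omega> = a" for \<omega>
    proof (cases "T \<omega> = \<top> \<or> enn2real (T \<omega>) = 0")
      case True
      then show ?thesis by auto
    next
      case False
      define t where "t = enn2real (T \<omega>)"
      have Tt: "T \<omega> \<noteq> \<top>" and t0: "t \<noteq> 0" using False by (simp_all add: t_def)
      have t: "0 < t" "T \<omega> = ennreal t"
      proof -
        show "0 < t" using t0 enn2real_nonneg[of "T \<omega>"] unfolding t_def by linarith
        show "T \<omega> = ennreal t" unfolding t_def using Tt by (cases "T \<omega>") auto
      qed
      define N where "N = nat \<lceil>t\<rceil> - 1"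
      have cpos: "0 < \<lceil>t\<rceil>" using t(1) by simp
      have gen: "\<And>cc::int. 0 < cc \<Longrightarrow> int (nat cc - 1) = cc - 1" by (subst of_nat_diff) auto
      have iN: "int N = \<lceil>t\<rceil> - 1" unfolding N_def by (rule gen[OF cpos])
      have rN: "real N = real_of_int \<lceil>t\<rceil> - 1"
        using iN by (metis of_int_1 of_int_diff of_int_of_nat_eq)
      have N1: "real N < t" "t \<le> real N + 1"
        unfolding rN using ceiling_correct[of t] by linarith+
      have "of_nat N < T \<omega>" unfolding t(2) ennreal_of_nat_eq_real_of_nat
        using N1 t(1) by (intro ennreal_lessI)
      then have "\<omega> \<in> A N" using TA that by blast
      have "ennreal (enn2real (T \<omega>) powr p) \<le> ennreal ((real N + 1) powr p)"
        using N1 t p unfolding t_def[symmetric] by (intro ennreal_leI powr_mono2) auto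
      also have "\<dots> = f N \<omega>" using \<open>\<omega> \<in> A N\<close> by (simp add: f_def)
      also have "\<dots> \<le> (\<Sum>n. f n \<omega>)"
        using sum_le_suminf[of "\<lambda>n. f n \<omega>" "{N}", OF summableI] by simp
      finally show ?thesis .
    qed
    have summ: "summable (\<lambda>n. (real n + 1) powr p * q ^ n)" by (rule summable_powr_geom[OF q])
    have AEpw: "AE \<omega> in M. ennreal (enn2real (T \<omega>) powr p) \<le> (\<Sum>n. f n \<omega>)"
      using B0 AE_space
    proof eventually_elim
      case (elim \<omega>)
      then show ?case using pw by blast
    qed
    have "(\<integral>\<^sup>+\<omega>. ennreal (enn2real (T \<omega>) powr p) \<partial>M) \<le> (\<integral>\<^sup>+\<omega>. (\<Sum>n. f n \<omega>) \<partial>M)"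
      by (rule nn_integral_mono_AE[OF AEpw])
    also have "\<dots> = (\<Sum>n. \<integral>\<^sup>+\<omega>. f n \<omega> \<partial>M)"
      by (rule nn_integral_suminf) (rule fm)
    also have "\<dots> = (\<Sum>n. ennreal ((real n + 1) powr p) * emeasure M (A n))"
      unfolding f_def by (simp add: nn_integral_cmult_indicator)
    also have "\<dots> \<le> (\<Sum>n. ennreal ((real n + 1) powr p * q ^ n))"
    proof (intro suminf_le summableI)
      fix n
      have "ennreal ((real n + 1) powr p) * emeasure M (A n) \<le> ennreal ((real n + 1) powr p) * ennreal (q ^ n)"
        by (intro mult_left_mono Abound) auto
      then show "ennreal ((real n + 1) powr p) * emeasure M (A n) \<le> ennreal ((real n + 1) powr p * q ^ n)"
        using q by (simp add: ennreal_mult)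
    qed
    also have "\<dots> = ennreal (\<Sum>n. (real n + 1) powr p * q ^ n)"
      using summ q by (intro suminf_ennreal2) auto
    also have "\<dots> < \<top>" by simp
    finally show "finite_moment M (exit_time B D) p"
      unfolding finite_moment_def using AE_fin unfolding T_def by simp
  qed
qed

end
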